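(* Let $K$ be a virtual knotoid diagram, let $s$ be a state of $K$, and let $G^s_K$ be the associated marked ribbon graph decorated with signs and arrows. Let $e_+$ and $e_-$ be the numbers of positive and negative edges of $G^s_K$, and define edge weights $b_e=B/A$ if $e$ is positive and $b_e=A/B$ if $e$ is negative. Then \[\langle K\rangle=\frac{A^{e_+}B^{e_-}}{d}\,R_{G^s_K}(1,\mathbf b,d),\] and consequently \[\langle K\rangle_A=\frac{A^{e_+-e_-}}{-A^2-A^{-2}}\,R_{G^s_K}\big(1,\mathbf b|_{B=A^{-1}},-A^2-A^{-2}\big).\]
   Context: Write $I=[0,1]$. A virtual knotoid diagram is an immersion of $I$ into $S^2$ whose singularities are finitely many transversal double points, each decorated either as a classical crossing (with over/under information) or as a virtual crossing; tail = image of $0$, head = image of $1$, oriented tail to head. Oriented state expansion: at each classical crossing there are two smoothings, the Kauffman $A$-smoothing and $B$-smoothing. Exactly one is compatible with the orientation (oriented smoothing); the other (disoriented) reverses the orientation along its arcs, and at each of the two points of reversal an arrow (a mark pointing in one direction along the curve) is placed, oriented counterclockwise around the former crossing. A state $s$ is a choice of smoothing at every classical crossing; it consists of loop components and one arc component (possibly with virtual crossings), decorated with arrows. Reduction: virtual moves (arrows pass virtual crossings) and cancellation of two consecutive arrows pointing in the same direction along a component. Each loop reduces to $K_i$ (a loop with $2i$ alternating arrows, $i\ge0$), and the arc reduces to $\Lambda_i$ or $\Lambda_i'$ (an arc with $2i$ alternating arrows whose first arrow from the tail points along, respectively against, the orientation at the tail). The arrow bracket is \[\langle K\rangle=\sum_s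 A^{a(s)}B^{b(s)}\prod_{\text{loops }C}d\,K_{i(C)}\cdot\Lambda^{(\prime)}_{j(s)}\in\mathbb Z[A,B,d,\{K_i,\Lambda_i,\Lambda_i'\}],\] where $a(s),b(s)$ are the numbers of $A$- and $B$-smoothings, $K_0=\Lambda_0=\Lambda_0'=1$, and $K_i,\Lambda_i,\Lambda_i'$ are commuting variables. The arrow polynomial $\langle K\rangle_A$ is its specialization at $B=A^{-1}$, $d=-A^2-A^{-2}$. A ribbon graph is a surface that is a union of vertex discs and edge discs, each edge disc meeting vertex discs in exactly two disjoint segments (attaching arcs); a marked vertex carries a marking (a boundary point away from attaching arcs) and an orientation of its boundary. The marked ribbon graph $G^s_K$: vertices are discs bounded by the state components of $s$, the arc component giving the marked vertex whose boundary is the arc closed up through the marking joining its endpoints, oriented tail to head. Edges correspond to classical crossings: at each smoothing site a small planar ribbon joins the two opposite arcs of the smoothing. Sign $+$ if $s$ uses the $A$-smoothing there, $-$ otherwise. Each edge gets two arrows running counterclockwise: if the smoothing is oriented, one on each edge boundary arc not meeting a vertex; if disoriented, one on each attaching arc. For a spanning subgraph $F\subseteq E(G)$ of a marked ribbon graph $G$ with one marked vertex, $k(F)$ is its number of components and $\mathrm{bc}(F)$ its number of boundary components; one boundary component passes through the marking, the others form $\partial^c(F)$. After cancelling consecutive equally-directed arrows, a circular component has $2j$ alternating arrows and contributes $K_j$; the marked component, read from the marking along the orientation, contributes $\Lambda_j$ or $\Lambda_j'$ according as its first arrow points along or against the orientation. The arrow Bollobás–Riordan polynomial is \[R_G(a,\mathbf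 b,c)=\sum_{F\subseteq E(G)}a^{k(F)}\Big(\prod_{e\in F}b_e\Big)c^{\mathrm{bc}(F)}\Big(\prod_{f\in\partial^c(F)}K_{j(f)}\Big)\Lambda^{(\prime)}_{j(F)}.\] *)

theory Defs
  imports Main
begin

text \<open>An arc-graph is a set X of arcs (identifiers of type 'x), each with two
endpoints (ends :: 'x => 'p * 'p) and possibly an arrow, given as the endpoint
the arrow points towards (arw :: 'x => 'p option).  Curves (state components,
boundary components of ribbon graphs) are the connected components of such
arc-graphs; every point has degree 2 (or 1 at the tail/head of a knotoid).\<close>

definition pts :: "'x set \<Rightarrow> ('x \<Rightarrow> 'p \<times> 'p) \<Rightarrow> 'p set" where
  "pts X en = fst ` en ` X \<union> snd ` en ` X"

definition adj :: "'x set \<Rightarrow> ('x \<Rightarrow> 'p \<times> 'p) \<Rightarrow> 'p \<Rightarrow> 'p \<Rightarrow> bool" where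
  "adj X en u v \<longleftrightarrow> (\<exists>x\<in>X. en x = (u, v) \<or> en x = (v, u))"

definition comp_of :: "'x set \<Rightarrow> ('x \<Rightarrow> 'p \<times> 'p) \<Rightarrow> 'p \<Rightarrow> 'p set" where
  "comp_of X en p = {q. (adj X en)\<^sup>*\<^sup>* p q}"

definition comps :: "'x set \<Rightarrow> ('x \<Rightarrow> 'p \<times> 'p) \<Rightarrow> 'p set set" where
  "comps X en = comp_of X en ` pts X en"

text \<open>A trail: a list of traversed arcs (x, u, v) -- arc x traversed from u to v --
using distinct arcs, consecutive traversals being joined.\<close>
definition is_trail :: "'x set \<Rightarrow> ('x \<Rightarrow> 'p \<times> 'p) \<Rightarrow> ('x \<times> 'p \<times> 'p) list \<Rightarrow> bool" where
  "is_trail X en ts \<longleftrightarrow>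
     (\<forall>(x, u, v) \<in> set ts. x \<in> X \<and> (en x = (u, v) \<or> en x = (v, u))) \<and>
     distinct (map fst ts) \<and>
     (\<forall>i. Suc i < length ts \<longrightarrow> snd (snd (ts ! i)) = fst (snd (ts ! Suc i)))"

definition arcs_in :: "'x set \<Rightarrow> ('x \<Rightarrow> 'p \<times> 'p) \<Rightarrow> 'p set \<Rightarrow> 'x set" where
  "arcs_in X en C = {x \<in> X. fst (en x) \<in> C}"

definition closed_traversal :: "'x set \<Rightarrow> ('x \<Rightarrow> 'p \<times> 'p) \<Rightarrow> 'p set \<Rightarrow> ('x \<times> 'p \<times> 'p) list \<Rightarrow> bool" where
  "closed_traversal X en C ts \<longleftrightarrow> is_trail X en ts \<and> ts \<noteq> [] \<and>
     snd (snd (last ts)) = fst (snd (hd ts)) \<and> set (map fst ts) = arcs_in X en C"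

text \<open>Arrow word read along a traversal: True = the arrow points along the direction
of traversal, False = against it.\<close>
definition arrow_word :: "('x \<Rightarrow> 'p option) \<Rightarrow> ('x \<times> 'p \<times> 'p) list \<Rightarrow> bool list" where
  "arrow_word ar ts = concat (map (\<lambda>(x, u, v). case ar x of None \<Rightarrow> [] | Some p \<Rightarrow> [p = v]) ts)"

text \<open>Cancellation of two consecutive arrows pointing in the same direction: on an arc
(linear word) and on a circle (cyclic word, where the last and first arrow are consecutive).\<close>
definition lin_step :: "bool list \<Rightarrow> bool list \<Rightarrow> bool" where
  "lin_step w w' \<longleftrightarrow> (\<exists>u v a. w = u @ a # a # v \<and> w' = u @ v)"

definition cyc_step :: "bool list \<Rightarrow> bool list \<Rightarrow> bool" where
  "cyc_step w w' \<longleftrightarrow> lin_step w w' \<or> (\<exists>u a. w = a # u @ [a] \<and> w' = u)"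

definition lin_reduced :: "bool list \<Rightarrow> bool list \<Rightarrow> bool" where
  "lin_reduced w r \<longleftrightarrow> lin_step\<^sup>*\<^sup>* w r \<and> \<not> (\<exists>r'. lin_step r r')"

definition cyc_reduced :: "bool list \<Rightarrow> bool list \<Rightarrow> bool" where
  "cyc_reduced w r \<longleftrightarrow> cyc_step\<^sup>*\<^sup>* w r \<and> \<not> (\<exists>r'. cyc_step r r')"

text \<open>Index i of K_i for a circular component C (reduced word has 2i arrows).\<close>
definition loop_index :: "'x set \<Rightarrow> ('x \<Rightarrow> 'p \<times> 'p) \<Rightarrow> ('x \<Rightarrow> 'p option) \<Rightarrow> 'p set \<Rightarrow> nat" where
  "loop_index X en ar C =
     length (SOME r. \<exists>ts. closed_traversal X en C ts \<and> cyc_reduced (arrow_word ar ts) r) div 2"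

text \<open>Value of the marked/arc component whose arrow word is w:
 Lambda_j if the reduced word (2j arrows) starts with an arrow along the orientation,
 Lambda'_j if against; 1 (= Lambda_0 = Lambda'_0) if no arrows remain.\<close>
definition lam_value :: "(nat \<Rightarrow> 'a::field) \<Rightarrow> (nat \<Rightarrow> 'a) \<Rightarrow> bool list \<Rightarrow> 'a" where
  "lam_value L L' r = (if r = [] then 1 else if hd r then L (length r div 2) else L' (length r div 2))"

text \<open>Boundary arcs of a ribbon graph: VA = free arc of a vertex boundary
(not meeting an edge), AT e = attaching arc of edge e (2 per edge),
SD e = side of the edge disc of e not meeting a vertex (2 per edge).
The surface is determined by how these arcs are glued at their endpoints.\<close>
datatype arck = VA | AT nat | SD nat

record ('x, 'p) mrgraph =
  rarcs  :: "'x set"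
  rends  :: "'x \<Rightarrow> 'p \<times> 'p"
  rkind  :: "'x \<Rightarrow> arck"
  rarw   :: "'x \<Rightarrow> 'p option"
  rmark  :: "'x"            \<comment> \<open>free arc of the marked vertex carrying the marking; the
                                 boundary orientation runs from fst to snd of its ends\<close>
  redges :: "nat set"
  rsign  :: "nat \<Rightarrow> bool"  \<comment> \<open>True = positive edge\<close>

text \<open>Arcs of the spanning subgraph F (all vertex discs plus edge discs of F)
and arcs of its boundary.\<close>
definition sub_arcs :: "('x, 'p) mrgraph \<Rightarrow> nat set \<Rightarrow> 'x set" where
  "sub_arcs G F = {x \<in> rarcs G. case rkind G x of VA \<Rightarrow> True | AT e \<Rightarrow> True | SD e \<Rightarrow> e \<in> F}"

definition bnd_arcs :: "('x, 'p) mrgraph \<Rightarrow> nat set \<Rightarrow> 'x set" where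
  "bnd_arcs G F = {x \<in> rarcs G. case rkind G x of VA \<Rightarrow> True | AT e \<Rightarrow> e \<notin> F | SD e \<Rightarrow> e \<in> F}"

definition kcomp :: "('x, 'p) mrgraph \<Rightarrow> nat set \<Rightarrow> nat" where
  "kcomp G F = card (comps (sub_arcs G F) (rends G))"

definition bc :: "('x, 'p) mrgraph \<Rightarrow> nat set \<Rightarrow> nat" where
  "bc G F = card (comps (bnd_arcs G F) (rends G))"

definition marked_bcomp :: "('x, 'p) mrgraph \<Rightarrow> nat set \<Rightarrow> 'p set" where
  "marked_bcomp G F = comp_of (bnd_arcs G F) (rends G) (fst (rends G (rmark G)))"

definition marked_value :: "('x, 'p) mrgraph \<Rightarrow> nat set \<Rightarrow> (nat \<Rightarrow> 'a::field) \<Rightarrow> (nat \<Rightarrow> 'a) \<Rightarrow> 'a" where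
  "marked_value G F L L' = lam_value L L'
     (SOME r. \<exists>ts. closed_traversal (bnd_arcs G F) (rends G) (marked_bcomp G F) ts \<and>
         hd ts = (rmark G, rends G (rmark G)) \<and>
         lin_reduced (arrow_word (rarw G) ts) r)"

definition arrowBR :: "('x, 'p) mrgraph \<Rightarrow> 'a::field \<Rightarrow> (nat \<Rightarrow> 'a) \<Rightarrow> 'a \<Rightarrow>
    (nat \<Rightarrow> 'a) \<Rightarrow> (nat \<Rightarrow> 'a) \<Rightarrow> (nat \<Rightarrow> 'a) \<Rightarrow> 'a" where
  "arrowBR G a b c K L L' = (\<Sum>F \<in> Pow (redges G).
      a ^ kcomp G F * (\<Prod>e\<in>F. b e) * c ^ bc G F *
      (\<Prod>C \<in> comps (bnd_arcs G F) (rends G) - {marked_bcomp G F}.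
          K (loop_index (bnd_arcs G F) (rends G) (rarw G) C)) *
      marked_value G F L L')"

definition epos :: "('x, 'p) mrgraph \<Rightarrow> nat" where
  "epos G = card {e \<in> redges G. rsign G e}"

definition eneg :: "('x, 'p) mrgraph \<Rightarrow> nat" where
  "eneg G = card {e \<in> redges G. \<not> rsign G e}"

text \<open>Virtual knotoid diagrams up to virtual moves are encoded by their Gauss code:
the classical crossings met along the curve from tail to head.  Passage i is the i-th
passage through a classical crossing; code ! i = (c, ov) means it passes crossing c,
over if ov.  sgn c = True iff crossing c is positive.  Virtual crossings are not
recorded (both sides of the theorem are insensitive to them).\<close>
record kdiag =
  code :: "(nat \<times> bool) list"
  sgn  :: "nat \<Rightarrow> bool"

definition ncross :: "kdiag \<Rightarrow> nat" where
  "ncross D = length (code D) div 2"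

definition wf_kdiag :: "kdiag \<Rightarrow> bool" where
  "wf_kdiag D \<longleftrightarrow> even (length (code D)) \<and>
     (\<forall>i < length (code D). fst (code D ! i) < ncross D) \<and>
     (\<forall>c < ncross D. \<exists>p q. p < length (code D) \<and> q < length (code D) \<and>
         code D ! p = (c, True) \<and> code D ! q = (c, False) \<and>
         {i. i < length (code D) \<and> fst (code D ! i) = c} = {p, q})"

definition opass :: "kdiag \<Rightarrow> nat \<Rightarrow> nat" where
  "opass D c = (THE p. p < length (code D) \<and> code D ! p = (c, True))"

definition upass :: "kdiag \<Rightarrow> nat \<Rightarrow> nat" where
  "upass D c = (THE q. q < length (code D) \<and> code D ! q = (c, False))"

text \<open>Ends: the tail, the head, and for each passage i the incoming end In i and the
outgoing end Out i of the strand at the crossing.\<close>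
datatype pt = Tail | Head | In nat | Out nat

text \<open>Arcs: Seg i = piece of the curve before passage i (Seg (length code) ends at the
head); Mk = arc closing the knotoid arc through the marking (head to tail);
Sm c a k = the two arcs (k) of the A-smoothing (a = True) or B-smoothing (a = False)
at crossing c.\<close>
datatype darc = Seg nat | Mk | Sm nat bool bool

definition seg_ends :: "kdiag \<Rightarrow> nat \<Rightarrow> pt \<times> pt" where
  "seg_ends D i = (if i = 0 then Tail else Out (i - 1), if i = length (code D) then Head else In i)"

text \<open>Local picture at crossing c (over passage p, under passage q).  Counterclockwise
order of the ends: positive: Out p, Out q, In p, In q; negative: Out p, In q, In p, Out q.
A-smoothing joins each over end to its clockwise neighbour, B-smoothing to its
counterclockwise neighbour (Kauffman's convention: A-regions are swept by rotating the
over strand counterclockwise).\<close>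
definition sm_ends :: "kdiag \<Rightarrow> nat \<Rightarrow> bool \<Rightarrow> bool \<Rightarrow> pt \<times> pt" where
  "sm_ends D c a k =
    (let p = opass D c; q = upass D c;
         cwo = (if sgn D c then In q else Out q);   \<comment> \<open>clockwise neighbour of Out p\<close>
         cwi = (if sgn D c then Out q else In q)    \<comment> \<open>clockwise neighbour of In p\<close>
     in if a then (if k then (Out p, cwo) else (In p, cwi))
             else (if k then (Out p, cwi) else (In p, cwo)))"

text \<open>Arrows on the arcs of the disoriented smoothing (B for positive, A for negative
crossings), pointing counterclockwise around the crossing.\<close>
definition sm_arw :: "kdiag \<Rightarrow> nat \<Rightarrow> bool \<Rightarrow> bool \<Rightarrow> pt option" where
  "sm_arw D c a k =
    (if a = sgn D c then None
     else if a then Some (fst (sm_ends D c a k)) else Some (snd (sm_ends D c a k)))"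

definition d_ends :: "kdiag \<Rightarrow> darc \<Rightarrow> pt \<times> pt" where
  "d_ends D x = (case x of Seg i \<Rightarrow> seg_ends D i | Mk \<Rightarrow> (Head, Tail) | Sm c a k \<Rightarrow> sm_ends D c a k)"

definition d_arw :: "kdiag \<Rightarrow> darc \<Rightarrow> pt option" where
  "d_arw D x = (case x of Sm c a k \<Rightarrow> sm_arw D c a k | _ \<Rightarrow> None)"

text \<open>A state is given by the set S of crossings receiving the A-smoothing.
Its arcs: the curve pieces and the smoothing arcs.\<close>
definition state_arcs :: "kdiag \<Rightarrow> nat set \<Rightarrow> darc set" where
  "state_arcs D S = {Seg i | i. i \<le> length (code D)} \<union>
                    {Sm c a k | c a k. c < ncross D \<and> (a \<longleftrightarrow> c \<in> S)}"

definition arc_comp :: "kdiag \<Rightarrow> nat set \<Rightarrow> pt set" where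
  "arc_comp D S = comp_of (state_arcs D S) (d_ends D) Tail"

definition state_loops :: "kdiag \<Rightarrow> nat set \<Rightarrow> pt set set" where
  "state_loops D S = comps (state_arcs D S) (d_ends D) - {arc_comp D S}"

definition arc_value :: "kdiag \<Rightarrow> nat set \<Rightarrow> (nat \<Rightarrow> 'a::field) \<Rightarrow> (nat \<Rightarrow> 'a) \<Rightarrow> 'a" where
  "arc_value D S L L' = lam_value L L'
     (SOME r. \<exists>ts. is_trail (state_arcs D S) (d_ends D) ts \<and> ts \<noteq> [] \<and>
        fst (snd (hd ts)) = Tail \<and> snd (snd (last ts)) = Head \<and>
        set (map fst ts) = arcs_in (state_arcs D S) (d_ends D) (arc_comp D S) \<and>
        lin_reduced (arrow_word (d_arw D) ts) r)"

definition arrow_bracket :: "kdiag \<Rightarrow> 'a::field \<Rightarrow> 'a \<Rightarrow> 'a \<Rightarrow>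
    (nat \<Rightarrow> 'a) \<Rightarrow> (nat \<Rightarrow> 'a) \<Rightarrow> (nat \<Rightarrow> 'a) \<Rightarrow> 'a" where
  "arrow_bracket D A B d K L L' = (\<Sum>S \<in> Pow {0..<ncross D}.
      A ^ card S * B ^ (ncross D - card S) *
      (\<Prod>C \<in> state_loops D S. d * K (loop_index (state_arcs D S) (d_ends D) (d_arw D) C)) *
      arc_value D S L L')"

definition arrow_poly :: "kdiag \<Rightarrow> 'a::field \<Rightarrow> (nat \<Rightarrow> 'a) \<Rightarrow> (nat \<Rightarrow> 'a) \<Rightarrow> (nat \<Rightarrow> 'a) \<Rightarrow> 'a" where
  "arrow_poly D A K L L' = arrow_bracket D A (inverse A) (- (A ^ 2) - inverse A ^ 2) K L L'"

text \<open>The marked ribbon graph G^s_K of the state s = S: vertices bounded by the state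
components (the arc component closed through the marking arc Mk, oriented tail to
head), one edge per classical crossing whose attaching arcs are the arcs of the chosen
smoothing and whose sides are the arcs of the other smoothing; positive iff S uses the
A-smoothing; arrows (counterclockwise) on the arcs of the disoriented smoothing, i.e.
on the sides if s is oriented there and on the attaching arcs otherwise.\<close>
definition ribbon :: "kdiag \<Rightarrow> nat set \<Rightarrow> (darc, pt) mrgraph" where
  "ribbon D S = \<lparr> rarcs = {Seg i | i. i \<le> length (code D)} \<union> {Mk} \<union>
                         {Sm c a k | c a k. c < ncross D},
                 rends = d_ends D,
                 rkind = (\<lambda>x. case x of Sm c a k \<Rightarrow> (if (a \<longleftrightarrow> c \<in> S) then AT c else SD c) | _ \<Rightarrow> VA),
                 rarw = d_arw D,
                 rmark = Mk,
                 redges = {0..<ncross D},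
                 rsign = (\<lambda>c. c \<in> S) \<rparr>"

end

theory Submission
  imports Defs
begin


definition ind :: "'p \<Rightarrow> 'p \<Rightarrow> nat" where "ind u q = (if u = q then 1 else 0)"

definition deg :: "'x set \<Rightarrow> ('x \<Rightarrow> 'p \<times> 'p) \<Rightarrow> 'p \<Rightarrow> nat" where
  "deg X en q = (\<Sum>x\<in>X. ind (fst (en x)) q + ind (snd (en x)) q)"

lemma adj_sym: "adj X en u v = adj X en v u"
  unfolding adj_def by blast

lemma adj_pts: "adj X en u v \<Longrightarrow> v \<in> pts X en"
proof -
  assume "adj X en u v"
  then obtain x where x: "x \<in> X" "en x = (u, v) \<or> en x = (v, u)" unfolding adj_def by blast
  then have "v = snd (en x) \<or> v = fst (en x)" by auto
  then show ?thesis using x(1) unfolding pts_def by auto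
qed

lemma comp_of_sub: "comp_of X en p \<subseteq> insert p (pts X en)"
proof
  fix q assume "q \<in> comp_of X en p"
  then have "(adj X en)\<^sup>*\<^sup>* p q" by (simp add: comp_of_def)
  then show "q \<in> insert p (pts X en)"
    by (cases rule: rtranclp.cases) (auto dest: adj_pts)
qed

lemma finite_pts: "finite X \<Longrightarrow> finite (pts X en)"
  unfolding pts_def by auto

lemma finite_comp_of: "finite X \<Longrightarrow> finite (comp_of X en p)"
  by (meson comp_of_sub finite_insert finite_pts finite_subset)

lemma comp_closed: "q \<in> comp_of X en p \<Longrightarrow> adj X en q r \<Longrightarrow> r \<in> comp_of X en p"
  unfolding comp_of_def by (auto intro: rtranclp.rtrancl_into_rtrancl)

lemma rtranclp_adj_sym: "(adj X en)\<^sup>*\<^sup>* u v \<Longrightarrow> (adj X en)\<^sup>*\<^sup>* v u"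
proof (induction rule: rtranclp_induct)
  case base then show ?case by simp
next
  case (step y z)
  have "adj X en z y" using step(2) adj_sym[of X en y z] by simp
  then show ?case by (rule converse_rtranclp_into_rtranclp[OF _ step.IH])
qed

lemma comp_of_eq: "q \<in> comp_of X en p \<Longrightarrow> comp_of X en q = comp_of X en p"
proof -
  assume "q \<in> comp_of X en p"
  then have pq: "(adj X en)\<^sup>*\<^sup>* p q" by (simp add: comp_of_def)
  then have qp: "(adj X en)\<^sup>*\<^sup>* q p" by (rule rtranclp_adj_sym)
  show ?thesis unfolding comp_of_def
    using rtranclp_trans[OF pq] rtranclp_trans[OF qp] by blast
qed

lemma sum_ind: "finite C \<Longrightarrow> (\<Sum>q\<in>C. ind a q) = (if a \<in> C then 1 else 0)"
  unfolding ind_def by (rule sum.delta')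

lemma handshake:
  assumes "finite X"
  shows "even (\<Sum>q\<in>comp_of X en p. deg X en q)"
proof -
  let ?C = "comp_of X en p"
  have fC: "finite ?C" using assms by (rule finite_comp_of)
  have "(\<Sum>q\<in>?C. deg X en q) = (\<Sum>x\<in>X. \<Sum>q\<in>?C. ind (fst (en x)) q + ind (snd (en x)) q)"
    unfolding deg_def by (rule sum.swap)
  also have "\<dots> = (\<Sum>x\<in>X. (if fst (en x) \<in> ?C then 1 else 0) + (if snd (en x) \<in> ?C then 1 else 0))"
    using fC by (intro sum.cong refl) (simp add: sum.distrib sum_ind)
  finally have eq: "(\<Sum>q\<in>?C. deg X en q) = \<dots>" .
  have "even ((if fst (en x) \<in> ?C then 1 else 0) + (if snd (en x) \<in> ?C then 1 else (0::nat)))"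
    if "x \<in> X" for x
  proof -
    have a: "adj X en (fst (en x)) (snd (en x))" unfolding adj_def using that by (intro bexI[of _ x]) simp_all
    have b: "adj X en (snd (en x)) (fst (en x))" using a adj_sym by metis
    have "fst (en x) \<in> ?C \<longleftrightarrow> snd (en x) \<in> ?C"
      using comp_closed[OF _ a] comp_closed[OF _ b] by (intro iffI)
    then show ?thesis by simp
  qed
  then show ?thesis unfolding eq by (intro dvd_sum) simp
qed

lemma connected_ends:
  assumes "finite X" and "odd (deg X en t)"
    and "\<And>q. q \<noteq> t \<Longrightarrow> q \<noteq> h \<Longrightarrow> even (deg X en q)"
  shows "h \<in> comp_of X en t"
proof (rule ccontr)
  assume nh: "h \<notin> comp_of X en t"
  let ?C = "comp_of X en t"
  have t: "t \<in> ?C" by (simp add: comp_of_def)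
  have fC: "finite ?C" using assms(1) by (rule finite_comp_of)
  have "(\<Sum>q\<in>?C. deg X en q) = deg X en t + (\<Sum>q\<in>?C - {t}. deg X en q)"
    using fC t by (rule sum.remove)
  moreover have "even (\<Sum>q\<in>?C - {t}. deg X en q)"
    using nh assms(3) by (intro dvd_sum) blast
  ultimately have "odd (\<Sum>q\<in>?C. deg X en q)" using assms(2) by simp
  with handshake[OF assms(1), of en t] show False by simp
qed



lemma wf_cross:
  assumes "wf_kdiag D" "c < ncross D"
  obtains p q where "p < length (code D)" "q < length (code D)"
    "code D ! p = (c, True)" "code D ! q = (c, False)"
    "\<And>i. i < length (code D) \<Longrightarrow> fst (code D ! i) = c \<Longrightarrow> i = p \<or> i = q"
proof -
  have "\<forall>c < ncross D. \<exists>p q. p < length (code D) \<and> q < length (code D) \<and>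
         code D ! p = (c, True) \<and> code D ! q = (c, False) \<and>
         {i. i < length (code D) \<and> fst (code D ! i) = c} = {p, q}"
    using assms(1) unfolding wf_kdiag_def by (elim conjE)
  from this[rule_format, OF assms(2)] obtain p q where
    H: "p < length (code D)" "q < length (code D)" "code D ! p = (c, True)" "code D ! q = (c, False)"
      "{i. i < length (code D) \<and> fst (code D ! i) = c} = {p, q}"
    by (elim exE conjE)
  have "i = p \<or> i = q" if "i < length (code D)" "fst (code D ! i) = c" for i
  proof -
    have "i \<in> {i. i < length (code D) \<and> fst (code D ! i) = c}" using that by simp
    then have "i \<in> {p, q}" by (simp only: H(5))
    then show ?thesis by simp
  qed
  then show thesis using that H(1-4) by blast
qed

lemma wf_fst:
  assumes "wf_kdiag D" "i < length (code D)"
  shows "fst (code D ! i) < ncross D"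
  using assms unfolding wf_kdiag_def by (elim conjE) simp

lemma wf_pass:
  assumes "wf_kdiag D" "c < ncross D"
  shows "opass D c < length (code D) \<and> code D ! opass D c = (c, True) \<and>
         upass D c < length (code D) \<and> code D ! upass D c = (c, False)"
proof -
  obtain p q where pq: "p < length (code D)" "q < length (code D)"
    "code D ! p = (c, True)" "code D ! q = (c, False)"
    "\<And>i. i < length (code D) \<Longrightarrow> fst (code D ! i) = c \<Longrightarrow> i = p \<or> i = q"
    using wf_cross[OF assms] by blast
  have u1: "p' = p" if h: "p' < length (code D) \<and> code D ! p' = (c, True)" for p'
  proof -
    have "p' = p \<or> p' = q" using pq(5)[of p'] h by simp
    then show "p' = p" using h pq(4) by auto
  qed
  have u2: "p' = q" if h: "p' < length (code D) \<and> code D ! p' = (c, False)" for p'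
  proof -
    have "p' = p \<or> p' = q" using pq(5)[of p'] h by simp
    then show "p' = q" using h pq(3) by auto
  qed
  have "opass D c = p" unfolding opass_def
  proof (rule the_equality)
    show "p < length (code D) \<and> code D ! p = (c, True)" using pq by simp
  qed (rule u1)
  moreover have "upass D c = q" unfolding upass_def
  proof (rule the_equality)
    show "q < length (code D) \<and> code D ! q = (c, False)" using pq by simp
  qed (rule u2)
  ultimately show ?thesis using pq by simp
qed



lemma wf_inj:
  assumes "wf_kdiag D" "i < length (code D)" "i' < length (code D)" "code D ! i = code D ! i'"
  shows "i = i'"
proof -
  define c where "c = fst (code D ! i)"
  have c: "c < ncross D" using wf_fst[OF assms(1,2)] c_def by simp
  obtain p q where pq: "p < length (code D)" "q < length (code D)"
    "code D ! p = (c, True)" "code D ! q = (c, False)"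
    "\<And>j. j < length (code D) \<Longrightarrow> fst (code D ! j) = c \<Longrightarrow> j = p \<or> j = q"
    using wf_cross[OF assms(1) c] by blast
  have "i = p \<or> i = q" using pq(5)[OF assms(2)] c_def by simp
  moreover have "i' = p \<or> i' = q" using pq(5)[OF assms(3)] c_def assms(4) by simp
  ultimately show ?thesis using assms(4) pq(3,4) by auto
qed

lemma wf_count:
  assumes "wf_kdiag D"
  shows "(\<Sum>c\<in>{0..<ncross D}. (if opass D c = j then 1 else 0) + (if upass D c = j then 1 else 0))
        = (if j < length (code D) then 1 else (0::nat))"
proof (cases "j < length (code D)")
  case False
  have "\<forall>c\<in>{0..<ncross D}. opass D c \<noteq> j \<and> upass D c \<noteq> j"
    using wf_pass[OF assms] False by fastforce
  then show ?thesis using False by simp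
next
  case True
  define c0 where "c0 = fst (code D ! j)"
  have c0: "c0 < ncross D" using wf_fst[OF assms True] c0_def by simp
  have z: "(if opass D c = j then 1 else 0) + (if upass D c = j then 1 else (0::nat))
           = (if c = c0 then 1 else 0)" if "c < ncross D" for c
  proof (cases "c = c0")
    case False
    then show ?thesis using wf_pass[OF assms that] c0_def by auto
  next
    case cc: True
    have e: "code D ! j = (c0, snd (code D ! j))" by (simp add: c0_def)
    note w = wf_pass[OF assms c0]
    show ?thesis
    proof (cases "snd (code D ! j)")
      case s: True
      have "opass D c0 = j" using wf_inj[OF assms _ True, of "opass D c0"] w e s by simp
      moreover have "upass D c0 \<noteq> j" using w e s by auto
      ultimately show ?thesis using cc by simp
    next
      case s: False
      have "upass D c0 = j" using wf_inj[OF assms _ True, of "upass D c0"] w e s by simp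
      moreover have "opass D c0 \<noteq> j" using w e s by auto
      ultimately show ?thesis using cc by simp
    qed
  qed
  have "(\<Sum>c\<in>{0..<ncross D}. (if opass D c = j then 1 else 0) + (if upass D c = j then 1 else 0))
      = (\<Sum>c\<in>{0..<ncross D}. (if c = c0 then 1 else (0::nat)))"
    by (rule sum.cong) (auto simp: z)
  also have "\<dots> = 1" using c0 by simp
  finally show ?thesis using True by simp
qed

lemma state_arcs_eq:
  "state_arcs D S = Seg ` {..length (code D)} \<union> (\<lambda>(c, k). Sm c (c \<in> S) k) ` ({0..<ncross D} \<times> UNIV)"
  unfolding state_arcs_def by auto

lemma finite_state_arcs: "finite (state_arcs D S)"
  unfolding state_arcs_eq by auto

lemma sm_sum:
  "(\<Sum>k\<in>(UNIV::bool set). ind (fst (sm_ends D c a k)) P + ind (snd (sm_ends D c a k)) P)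
    = ind (Out (opass D c)) P + ind (In (opass D c)) P + ind (Out (upass D c)) P + ind (In (upass D c)) P"
  unfolding sm_ends_def Let_def by (cases a; cases "sgn D c") (simp_all add: UNIV_bool)

lemma deg_state:
  "deg (state_arcs D S) (d_ends D) P =
     (\<Sum>i\<in>{..length (code D)}. ind (fst (seg_ends D i)) P + ind (snd (seg_ends D i)) P) +
     (\<Sum>c\<in>{0..<ncross D}. ind (Out (opass D c)) P + ind (In (opass D c)) P + ind (Out (upass D c)) P + ind (In (upass D c)) P)"
proof -
  let ?f = "\<lambda>x. ind (fst (d_ends D x)) P + ind (snd (d_ends D x)) P"
  let ?A = "Seg ` {..length (code D)}"
  let ?B = "(\<lambda>(c, k). Sm c (c \<in> S) k) ` ({0..<ncross D} \<times> (UNIV::bool set))"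
  have disj: "?A \<inter> ?B = {}" by auto
  have inj1: "inj_on Seg {..length (code D)}" by (auto simp: inj_on_def)
  have inj2: "inj_on (\<lambda>(c, k). Sm c (c \<in> S) k) ({0..<ncross D} \<times> (UNIV::bool set))"
    by (auto simp: inj_on_def)
  have "deg (state_arcs D S) (d_ends D) P = sum ?f (?A \<union> ?B)"
    unfolding deg_def state_arcs_eq ..
  also have "\<dots> = sum ?f ?A + sum ?f ?B"
    by (rule sum.union_disjoint) (use disj in auto)
  also have "sum ?f ?A = (\<Sum>i\<in>{..length (code D)}. ind (fst (seg_ends D i)) P + ind (snd (seg_ends D i)) P)"
    by (subst sum.reindex[OF inj1]) (simp add: d_ends_def)
  also have "sum ?f ?B = (\<Sum>(c,k)\<in>{0..<ncross D} \<times> (UNIV::bool set). ind (fst (sm_ends D c (c \<in> S) k)) P + ind (snd (sm_ends D c (c \<in> S) k)) P)"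
    by (subst sum.reindex[OF inj2]) (simp add: d_ends_def case_prod_beta)
  also have "\<dots> = (\<Sum>c\<in>{0..<ncross D}. \<Sum>k\<in>(UNIV::bool set). ind (fst (sm_ends D c (c \<in> S) k)) P + ind (snd (sm_ends D c (c \<in> S) k)) P)"
    by (rule sum.cartesian_product[symmetric])
  also have "\<dots> = (\<Sum>c\<in>{0..<ncross D}. ind (Out (opass D c)) P + ind (In (opass D c)) P + ind (Out (upass D c)) P + ind (In (upass D c)) P)"
    by (rule sum.cong[OF refl]) (rule sm_sum)
  finally show ?thesis .
qed

lemma deg_Tail: "deg (state_arcs D S) (d_ends D) Tail = 1"
proof -
  have a: "(\<Sum>i\<in>{..length (code D)}. ind (fst (seg_ends D i)) Tail + ind (snd (seg_ends D i)) Tail)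
      = (\<Sum>i\<in>{..length (code D)}. if i = 0 then 1 else 0)"
    by (rule sum.cong[OF refl]) (simp add: seg_ends_def ind_def)
  show ?thesis unfolding deg_state a by (simp add: ind_def)
qed

lemma deg_In:
  assumes "wf_kdiag D"
  shows "even (deg (state_arcs D S) (d_ends D) (In j))"
proof -
  have a: "(\<Sum>i\<in>{..length (code D)}. ind (fst (seg_ends D i)) (In j) + ind (snd (seg_ends D i)) (In j))
      = (\<Sum>i\<in>{..length (code D)}. if i = j then (if j < length (code D) then 1 else 0) else 0)"
    by (rule sum.cong[OF refl]) (auto simp add: seg_ends_def ind_def)
  have b: "(\<Sum>c\<in>{0..<ncross D}. ind (Out (opass D c)) (In j) + ind (In (opass D c)) (In j) + ind (Out (upass D c)) (In j) + ind (In (upass D c)) (In j))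
      = (\<Sum>c\<in>{0..<ncross D}. (if opass D c = j then 1 else 0) + (if upass D c = j then 1 else 0))"
    by (rule sum.cong[OF refl]) (simp add: ind_def)
  show ?thesis unfolding deg_state a b wf_count[OF assms] by simp
qed

lemma deg_Out:
  assumes "wf_kdiag D"
  shows "even (deg (state_arcs D S) (d_ends D) (Out j))"
proof -
  have a: "(\<Sum>i\<in>{..length (code D)}. ind (fst (seg_ends D i)) (Out j) + ind (snd (seg_ends D i)) (Out j))
      = (\<Sum>i\<in>{..length (code D)}. if i = Suc j then 1 else 0)"
    by (rule sum.cong[OF refl]) (auto simp add: seg_ends_def ind_def)
  have b: "(\<Sum>c\<in>{0..<ncross D}. ind (Out (opass D c)) (Out j) + ind (In (opass D c)) (Out j) + ind (Out (upass D c)) (Out j) + ind (In (upass D c)) (Out j))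
      = (\<Sum>c\<in>{0..<ncross D}. (if opass D c = j then 1 else 0) + (if upass D c = j then 1 else 0))"
    by (rule sum.cong[OF refl]) (simp add: ind_def)
  show ?thesis unfolding deg_state a b wf_count[OF assms] by simp
qed

lemma head_in_arc_comp:
  assumes "wf_kdiag D"
  shows "Head \<in> arc_comp D S"
  unfolding arc_comp_def
proof (rule connected_ends[OF finite_state_arcs])
  show "odd (deg (state_arcs D S) (d_ends D) Tail)" by (simp add: deg_Tail)
  fix q :: pt assume "q \<noteq> Tail" "q \<noteq> Head"
  then show "even (deg (state_arcs D S) (d_ends D) q)"
    using deg_In[OF assms] deg_Out[OF assms] by (cases q) auto
qed

lemma adj_insert:
  "adj (insert m X) en u v \<longleftrightarrow> adj X en u v \<or> en m = (u, v) \<or> en m = (v, u)"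
  unfolding adj_def by blast

lemma rtc_insert:
  assumes "en m = (h, t)" "(adj X en)\<^sup>*\<^sup>* t h"
  shows "(adj (insert m X) en)\<^sup>*\<^sup>* u v \<longleftrightarrow> (adj X en)\<^sup>*\<^sup>* u v"
proof
  assume "(adj (insert m X) en)\<^sup>*\<^sup>* u v"
  then show "(adj X en)\<^sup>*\<^sup>* u v"
  proof (induction rule: rtranclp_induct)
    case base then show ?case by simp
  next
    case (step y z)
    have "(adj X en)\<^sup>*\<^sup>* y z"
    proof -
      have "adj X en y z \<or> en m = (y, z) \<or> en m = (z, y)" using step(2) adj_insert by metis
      moreover have "(adj X en)\<^sup>*\<^sup>* h t" using assms(2) by (rule rtranclp_adj_sym)
      ultimately show ?thesis using assms by auto
    qed
    then show ?case using step.IH by (rule rtranclp_trans[rotated])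
  qed
next
  assume "(adj X en)\<^sup>*\<^sup>* u v"
  then show "(adj (insert m X) en)\<^sup>*\<^sup>* u v"
  proof (rule rtranclp_mono[THEN predicate2D, rotated])
    show "adj X en \<le> adj (insert m X) en" unfolding adj_def by blast
  qed
qed

lemma comp_of_insert:
  assumes "en m = (h, t)" "(adj X en)\<^sup>*\<^sup>* t h"
  shows "comp_of (insert m X) en p = comp_of X en p"
  unfolding comp_of_def by (intro Collect_cong rtc_insert[OF assms])

lemma pts_insert: "pts (insert m X) en = insert (fst (en m)) (insert (snd (en m)) (pts X en))"
  unfolding pts_def by auto

lemma is_trail_mono: "is_trail X en ts \<Longrightarrow> fst ` set ts \<subseteq> Y \<Longrightarrow> is_trail Y en ts"
  unfolding is_trail_def by fastforce

lemma is_trail_sub: "is_trail X en ts \<Longrightarrow> fst ` set ts \<subseteq> X"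
  unfolding is_trail_def by fastforce

lemma all_cons_iff:
  "(\<forall>i. Suc i < length (a # ts) \<longrightarrow> P ((a # ts) ! i) ((a # ts) ! Suc i)) \<longleftrightarrow>
   (ts \<noteq> [] \<longrightarrow> P a (hd ts)) \<and> (\<forall>i. Suc i < length ts \<longrightarrow> P (ts ! i) (ts ! Suc i))"
proof (intro iffI conjI impI allI)
  assume H: "\<forall>i. Suc i < length (a # ts) \<longrightarrow> P ((a # ts) ! i) ((a # ts) ! Suc i)"
  {
    assume "ts \<noteq> []"
    then show "P a (hd ts)" using H[rule_format, of 0] by (simp add: hd_conv_nth)
  }
  fix i assume "Suc i < length ts"
  then show "P (ts ! i) (ts ! Suc i)" using H[rule_format, of "Suc i"] by simp
next
  fix i
  assume H: "(ts \<noteq> [] \<longrightarrow> P a (hd ts)) \<and> (\<forall>i. Suc i < length ts \<longrightarrow> P (ts ! i) (ts ! Suc i))"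
    and i: "Suc i < length (a # ts)"
  show "P ((a # ts) ! i) ((a # ts) ! Suc i)"
  proof (cases i)
    case 0
    then show ?thesis using H i by (cases ts) auto
  next
    case (Suc j)
    then show ?thesis using H i by simp
  qed
qed

lemma is_trail_Cons:
  "is_trail X en ((x, u, v) # ts) \<longleftrightarrow>
     x \<in> X \<and> (en x = (u, v) \<or> en x = (v, u)) \<and> x \<notin> fst ` set ts \<and> is_trail X en ts \<and>
     (ts \<noteq> [] \<longrightarrow> v = fst (snd (hd ts)))"
proof -
  have "(\<forall>i. Suc i < length ((x, u, v) # ts) \<longrightarrow> snd (snd (((x, u, v) # ts) ! i)) = fst (snd (((x, u, v) # ts) ! Suc i)))
    \<longleftrightarrow> (ts \<noteq> [] \<longrightarrow> snd (snd (x, u, v)) = fst (snd (hd ts))) \<and> (\<forall>i. Suc i < length ts \<longrightarrow> snd (snd (ts ! i)) = fst (snd (ts ! Suc i)))"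
    by (rule all_cons_iff[where P = "\<lambda>a b. snd (snd a) = fst (snd b)"])
  then show ?thesis unfolding is_trail_def by auto
qed

lemma loop_index_insert:
  assumes "fst (en m) \<notin> C"
  shows "loop_index (insert m X) en ar C = loop_index X en ar C"
proof -
  have ai: "arcs_in (insert m X) en C = arcs_in X en C"
    using assms unfolding arcs_in_def by auto
  have "closed_traversal (insert m X) en C ts \<longleftrightarrow> closed_traversal X en C ts" for ts
  proof
    assume H: "closed_traversal (insert m X) en C ts"
    then have "set (map fst ts) = arcs_in X en C" unfolding closed_traversal_def ai by blast
    then have "fst ` set ts \<subseteq> X" unfolding arcs_in_def by auto
    then show "closed_traversal X en C ts" using H is_trail_mono
      unfolding closed_traversal_def ai by blast
  next
    assume H: "closed_traversal X en C ts"
    then show "closed_traversal (insert m X) en C ts" using is_trail_mono[of X en ts "insert m X"]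
      is_trail_sub[of X en ts] unfolding closed_traversal_def ai by blast
  qed
  then show ?thesis unfolding loop_index_def by simp
qed


lemma ribbon_simps[simp]:
  "rends (ribbon D S) = d_ends D" "rarw (ribbon D S) = d_arw D" "rmark (ribbon D S) = Mk"
  "redges (ribbon D S) = {0..<ncross D}" "rsign (ribbon D S) = (\<lambda>c. c \<in> S)"
  by (simp_all add: ribbon_def)

lemma bnd_ribbon:
  "bnd_arcs (ribbon D S) F = insert Mk (state_arcs D (S - F \<union> (F - S)))"
proof (rule set_eqI)
  fix x show "x \<in> bnd_arcs (ribbon D S) F \<longleftrightarrow> x \<in> insert Mk (state_arcs D (S - F \<union> (F - S)))"
    unfolding bnd_arcs_def state_arcs_def ribbon_def
    by (cases x) auto
qed

lemma Mk_notin: "Mk \<notin> state_arcs D S"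
  unfolding state_arcs_def by auto

lemma Tail_pts: "Tail \<in> pts (state_arcs D S) (d_ends D)"
proof -
  have "Seg 0 \<in> state_arcs D S" unfolding state_arcs_def by auto
  moreover have "fst (d_ends D (Seg 0)) = Tail" by (simp add: d_ends_def seg_ends_def)
  ultimately show ?thesis unfolding pts_def by (metis UnI1 image_eqI)
qed

lemma Head_pts: "Head \<in> pts (state_arcs D S) (d_ends D)"
proof -
  have "Seg (length (code D)) \<in> state_arcs D S" unfolding state_arcs_def by auto
  moreover have "snd (d_ends D (Seg (length (code D)))) = Head" by (simp add: d_ends_def seg_ends_def)
  ultimately show ?thesis unfolding pts_def by (metis UnI2 image_eqI)
qed


lemma marked_eq:
  assumes wf: "wf_kdiag D"
  shows "marked_value (ribbon D S) F L L' = arc_value D (S - F \<union> (F - S)) L L'"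
proof -
  define S' where "S' = S - F \<union> (F - S)"
  define X where "X = state_arcs D S'"
  define AC where "AC = arc_comp D S'"
  let ?en = "d_ends D"
  have hc: "Head \<in> AC" unfolding AC_def by (rule head_in_arc_comp[OF wf])
  have rt: "(adj X ?en)\<^sup>*\<^sup>* Tail Head" using hc unfolding AC_def arc_comp_def comp_of_def X_def by simp
  have emk: "?en Mk = (Head, Tail)" by (simp add: d_ends_def)
  have mb: "marked_bcomp (ribbon D S) F = AC"
  proof -
    have "marked_bcomp (ribbon D S) F = comp_of (insert Mk X) ?en Head"
      unfolding marked_bcomp_def bnd_ribbon X_def S'_def by (simp add: emk)
    also have "\<dots> = comp_of X ?en Head" by (rule comp_of_insert[OF emk rt])
    also have "\<dots> = AC" using comp_of_eq[of Head X ?en Tail] hc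
      unfolding AC_def arc_comp_def X_def by simp
    finally show ?thesis .
  qed
  have ai: "arcs_in (insert Mk X) ?en AC = insert Mk (arcs_in X ?en AC)"
    using hc emk unfolding arcs_in_def by auto
  have mkX: "Mk \<notin> X" unfolding X_def by (rule Mk_notin)
  have aw: "arrow_word (d_arw D) ((Mk, Head, Tail) # ts) = arrow_word (d_arw D) ts" for ts
    by (simp add: arrow_word_def d_arw_def)
  have eqP: "(\<exists>ts. closed_traversal (insert Mk X) ?en AC ts \<and> hd ts = (Mk, Head, Tail) \<and>
                lin_reduced (arrow_word (d_arw D) ts) r) \<longleftrightarrow>
             (\<exists>ts. is_trail X ?en ts \<and> ts \<noteq> [] \<and> fst (snd (hd ts)) = Tail \<and> snd (snd (last ts)) = Head \<and>
                set (map fst ts) = arcs_in X ?en AC \<and> lin_reduced (arrow_word (d_arw D) ts) r)" for r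
  proof
    assume "\<exists>ts. closed_traversal (insert Mk X) ?en AC ts \<and> hd ts = (Mk, Head, Tail) \<and>
                lin_reduced (arrow_word (d_arw D) ts) r"
    then obtain ts where ct: "closed_traversal (insert Mk X) ?en AC ts" and hd: "hd ts = (Mk, Head, Tail)"
      and lr: "lin_reduced (arrow_word (d_arw D) ts) r" by blast
    have ne: "ts \<noteq> []" using ct unfolding closed_traversal_def by blast
    then obtain ts0 where ts: "ts = (Mk, Head, Tail) # ts0" using hd by (cases ts) auto
    have tr: "is_trail (insert Mk X) ?en ts" using ct unfolding closed_traversal_def by blast
    then have tr0: "Mk \<notin> fst ` set ts0" "is_trail (insert Mk X) ?en ts0"
      "ts0 \<noteq> [] \<longrightarrow> Tail = fst (snd (hd ts0))"
      unfolding ts is_trail_Cons by auto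
    have cl: "snd (snd (last ts)) = fst (snd (hd ts))" using ct unfolding closed_traversal_def by blast
    have ne0: "ts0 \<noteq> []"
    proof
      assume "ts0 = []" then show False using cl ts by simp
    qed
    have lst: "last ts = last ts0" using ne0 ts by simp
    have st: "set (map fst ts) = arcs_in (insert Mk X) ?en AC" using ct unfolding closed_traversal_def by blast
    have st0: "set (map fst ts0) = arcs_in X ?en AC"
    proof -
      have "insert Mk (set (map fst ts0)) = insert Mk (arcs_in X ?en AC)" using st ts ai by simp
      moreover have "Mk \<notin> set (map fst ts0)" using tr0(1) by simp
      moreover have "Mk \<notin> arcs_in X ?en AC" using mkX unfolding arcs_in_def by simp
      ultimately show ?thesis by (metis insert_ident)
    qed
    have sub: "fst ` set ts0 \<subseteq> X" using st0 unfolding arcs_in_def by auto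
    show "\<exists>ts. is_trail X ?en ts \<and> ts \<noteq> [] \<and> fst (snd (hd ts)) = Tail \<and> snd (snd (last ts)) = Head \<and>
                set (map fst ts) = arcs_in X ?en AC \<and> lin_reduced (arrow_word (d_arw D) ts) r"
    proof (intro exI conjI)
      show "is_trail X ?en ts0" using is_trail_mono[OF tr0(2) sub] .
      show "ts0 \<noteq> []" by (rule ne0)
      show "fst (snd (hd ts0)) = Tail" using tr0(3) ne0 by simp
      show "snd (snd (last ts0)) = Head" using cl lst ts by simp
      show "set (map fst ts0) = arcs_in X ?en AC" by (rule st0)
      show "lin_reduced (arrow_word (d_arw D) ts0) r" using lr ts aw by simp
    qed
  next
    assume "\<exists>ts. is_trail X ?en ts \<and> ts \<noteq> [] \<and> fst (snd (hd ts)) = Tail \<and> snd (snd (last ts)) = Head \<and>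
                set (map fst ts) = arcs_in X ?en AC \<and> lin_reduced (arrow_word (d_arw D) ts) r"
    then obtain ts where tr: "is_trail X ?en ts" and ne: "ts \<noteq> []" and h: "fst (snd (hd ts)) = Tail"
      and l: "snd (snd (last ts)) = Head" and st: "set (map fst ts) = arcs_in X ?en AC"
      and lr: "lin_reduced (arrow_word (d_arw D) ts) r" by blast
    have sub: "fst ` set ts \<subseteq> X" by (rule is_trail_sub[OF tr])
    have tr': "is_trail (insert Mk X) ?en ((Mk, Head, Tail) # ts)"
      unfolding is_trail_Cons using emk sub mkX is_trail_mono[OF tr, of "insert Mk X"] h by auto
    show "\<exists>ts. closed_traversal (insert Mk X) ?en AC ts \<and> hd ts = (Mk, Head, Tail) \<and>
                lin_reduced (arrow_word (d_arw D) ts) r"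
    proof (intro exI conjI)
      show "closed_traversal (insert Mk X) ?en AC ((Mk, Head, Tail) # ts)"
        unfolding closed_traversal_def using tr' ne l st ai by simp
      show "hd ((Mk, Head, Tail) # ts) = (Mk, Head, Tail)" by simp
      show "lin_reduced (arrow_word (d_arw D) ((Mk, Head, Tail) # ts)) r" using lr aw by simp
    qed
  qed
  show ?thesis
    unfolding marked_value_def arc_value_def mb bnd_ribbon ribbon_simps
    unfolding S'_def[symmetric] X_def[symmetric] AC_def[symmetric] emk
    using eqP by simp
qed


lemma weight_eq:
  fixes A B :: "'a::field"
  assumes "finite N" "S \<subseteq> N" "F \<subseteq> N" "A \<noteq> 0" "B \<noteq> 0"
  shows "A ^ card S * B ^ (card N - card S) * (\<Prod>e\<in>F. if e \<in> S then B / A else A / B)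
       = A ^ card (S - F \<union> (F - S)) * B ^ (card N - card (S - F \<union> (F - S)))"
proof -
  have w: "(\<Prod>c\<in>N. if c \<in> T then A else B) = A ^ card T * B ^ (card N - card T)" if "T \<subseteq> N" for T
  proof -
    have "(\<Prod>c\<in>N. if c \<in> T then A else B) = (\<Prod>c\<in>N \<inter> {c. c \<in> T}. A) * (\<Prod>c\<in>N \<inter> - {c. c \<in> T}. B)"
      by (rule prod.If_cases[OF assms(1)])
    also have "N \<inter> {c. c \<in> T} = T" using that by auto
    also have "N \<inter> - {c. c \<in> T} = N - T" by auto
    finally show ?thesis using that assms(1) by (simp add: card_Diff_subset finite_subset)
  qed
  have p: "(\<Prod>e\<in>F. if e \<in> S then B / A else A / B) = (\<Prod>c\<in>N. if c \<in> F then (if c \<in> S then B / A else A / B) else 1)"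
  proof -
    have "(\<Prod>c\<in>N. if c \<in> F then (if c \<in> S then B / A else A / B) else 1)
        = (\<Prod>c\<in>N \<inter> {c. c \<in> F}. if c \<in> S then B / A else A / B) * (\<Prod>c\<in>N \<inter> - {c. c \<in> F}. 1)"
      by (rule prod.If_cases[OF assms(1)])
    also have "N \<inter> {c. c \<in> F} = F" using assms(3) by auto
    finally show ?thesis by simp
  qed
  have "A ^ card S * B ^ (card N - card S) * (\<Prod>e\<in>F. if e \<in> S then B / A else A / B)
      = (\<Prod>c\<in>N. (if c \<in> S then A else B) * (if c \<in> F then (if c \<in> S then B / A else A / B) else 1))"
    unfolding w[OF assms(2), symmetric] p prod.distrib ..
  also have "\<dots> = (\<Prod>c\<in>N. if c \<in> S - F \<union> (F - S) then A else B)"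
    by (rule prod.cong[OF refl]) (use assms(4,5) in auto)
  also have "\<dots> = A ^ card (S - F \<union> (F - S)) * B ^ (card N - card (S - F \<union> (F - S)))"
    by (rule w) (use assms(2,3) in auto)
  finally show ?thesis .
qed


lemma loops_eq:
  assumes wf: "wf_kdiag D"
  shows "comps (bnd_arcs (ribbon D S) F) (d_ends D) - {marked_bcomp (ribbon D S) F}
           = state_loops D (S - F \<union> (F - S))"
    and "bc (ribbon D S) F = card (comps (state_arcs D (S - F \<union> (F - S))) (d_ends D))"
    and "C \<in> state_loops D (S - F \<union> (F - S)) \<Longrightarrow>
         loop_index (bnd_arcs (ribbon D S) F) (d_ends D) (d_arw D) C
       = loop_index (state_arcs D (S - F \<union> (F - S))) (d_ends D) (d_arw D) C"
proof -
  define S' where "S' = S - F \<union> (F - S)"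
  define X where "X = state_arcs D S'"
  define AC where "AC = arc_comp D S'"
  let ?en = "d_ends D"
  have hc: "Head \<in> AC" unfolding AC_def by (rule head_in_arc_comp[OF wf])
  have rt: "(adj X ?en)\<^sup>*\<^sup>* Tail Head" using hc unfolding AC_def arc_comp_def comp_of_def X_def by simp
  have emk: "?en Mk = (Head, Tail)" by (simp add: d_ends_def)
  have bnd: "bnd_arcs (ribbon D S) F = insert Mk X" unfolding bnd_ribbon X_def S'_def ..
  have ci: "comp_of (insert Mk X) ?en p = comp_of X ?en p" for p by (rule comp_of_insert[OF emk rt])
  have pi: "pts (insert Mk X) ?en = pts X ?en"
    unfolding pts_insert emk using Head_pts Tail_pts unfolding X_def by auto
  have cs: "comps (insert Mk X) ?en = comps X ?en" unfolding comps_def ci pi ..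
  have mb: "marked_bcomp (ribbon D S) F = AC"
  proof -
    have "marked_bcomp (ribbon D S) F = comp_of (insert Mk X) ?en Head"
      unfolding marked_bcomp_def bnd by (simp add: emk)
    also have "\<dots> = comp_of X ?en Head" by (rule ci)
    also have "\<dots> = AC" using comp_of_eq[of Head X ?en Tail] hc
      unfolding AC_def arc_comp_def X_def by simp
    finally show ?thesis .
  qed
  show "comps (bnd_arcs (ribbon D S) F) (d_ends D) - {marked_bcomp (ribbon D S) F}
           = state_loops D (S - F \<union> (F - S))"
  proof -
    have "comps (bnd_arcs (ribbon D S) F) (d_ends D) - {marked_bcomp (ribbon D S) F} = comps X ?en - {AC}"
      unfolding bnd mb cs ..
    also have "\<dots> = state_loops D S'" unfolding state_loops_def X_def AC_def ..
    finally show ?thesis unfolding S'_def .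
  qed
  show "bc (ribbon D S) F = card (comps (state_arcs D (S - F \<union> (F - S))) (d_ends D))"
  proof -
    have "bc (ribbon D S) F = card (comps X ?en)" unfolding bc_def bnd ribbon_simps cs ..
    then show ?thesis unfolding X_def S'_def .
  qed
  assume C: "C \<in> state_loops D (S - F \<union> (F - S))"
  have "Head \<notin> C"
  proof
    assume h: "Head \<in> C"
    from C obtain p where Cp: "C = comp_of X ?en p" and "C \<noteq> AC"
      unfolding state_loops_def comps_def S'_def[symmetric] X_def AC_def by auto
    have "C = comp_of X ?en Head" using comp_of_eq[of Head X ?en p] h Cp by simp
    also have "\<dots> = AC" using comp_of_eq[of Head X ?en Tail] hc
      unfolding AC_def arc_comp_def X_def by simp
    finally show False using \<open>C \<noteq> AC\<close> by simp
  qed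
  then show "loop_index (bnd_arcs (ribbon D S) F) (d_ends D) (d_arw D) C
       = loop_index (state_arcs D (S - F \<union> (F - S))) (d_ends D) (d_arw D) C"
    unfolding bnd X_def S'_def by (intro loop_index_insert) (simp add: emk)
qed


lemma epos_ribbon: "S \<subseteq> {0..<ncross D} \<Longrightarrow> epos (ribbon D S) = card S"
proof -
  assume S: "S \<subseteq> {0..<ncross D}"
  have "{e \<in> {0..<ncross D}. e \<in> S} = S" using S by auto
  then show ?thesis unfolding epos_def ribbon_simps by simp
qed

lemma eneg_ribbon: "S \<subseteq> {0..<ncross D} \<Longrightarrow> eneg (ribbon D S) = ncross D - card S"
proof -
  assume S: "S \<subseteq> {0..<ncross D}"
  have "{e \<in> {0..<ncross D}. e \<notin> S} = {0..<ncross D} - S" by auto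
  then show ?thesis unfolding eneg_def ribbon_simps using S
    by (simp add: card_Diff_subset finite_subset)
qed

lemma term_eq:
  fixes A B d :: "'a::field"
  assumes wf: "wf_kdiag D" and S: "S \<subseteq> {0..<ncross D}" and F: "F \<subseteq> {0..<ncross D}"
    and A: "A \<noteq> 0" and B: "B \<noteq> 0" and d: "d \<noteq> 0"
  shows "A ^ card (S - F \<union> (F - S)) * B ^ (ncross D - card (S - F \<union> (F - S))) *
      (\<Prod>C\<in>state_loops D (S - F \<union> (F - S)). d * K (loop_index (state_arcs D (S - F \<union> (F - S))) (d_ends D) (d_arw D) C)) *
      arc_value D (S - F \<union> (F - S)) L L'
    = A ^ card S * B ^ (ncross D - card S) / d *
      (1 ^ kcomp (ribbon D S) F * (\<Prod>e\<in>F. (\<lambda>e. if rsign (ribbon D S) e then B / A else A / B) e) *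
       d ^ bc (ribbon D S) F *
       (\<Prod>C\<in>comps (bnd_arcs (ribbon D S) F) (rends (ribbon D S)) - {marked_bcomp (ribbon D S) F}.
          K (loop_index (bnd_arcs (ribbon D S) F) (rends (ribbon D S)) (rarw (ribbon D S)) C)) *
       marked_value (ribbon D S) F L L')"
proof -
  define S' where "S' = S - F \<union> (F - S)"
  define X where "X = state_arcs D S'"
  define PK where "PK = (\<Prod>C\<in>state_loops D S'. K (loop_index X (d_ends D) (d_arw D) C))"
  define V where "V = arc_value D S' L L'"
  define m where "m = card (comps X (d_ends D))"
  have fin: "finite (comps X (d_ends D))" unfolding comps_def X_def
    by (intro finite_imageI finite_pts finite_state_arcs)
  have acin: "arc_comp D S' \<in> comps X (d_ends D)"
    unfolding comps_def arc_comp_def X_def using Tail_pts by blast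
  have m1: "m \<ge> 1" unfolding m_def using fin acin by (metis One_nat_def Suc_leI card_gt_0_iff empty_iff)
  have cl: "card (state_loops D S') = m - 1"
    unfolding state_loops_def m_def X_def[symmetric] using fin acin by simp
  have lhs: "(\<Prod>C\<in>state_loops D S'. d * K (loop_index X (d_ends D) (d_arw D) C)) = d ^ (m - 1) * PK"
    unfolding PK_def prod.distrib cl[symmetric] by simp
  have rK: "(\<Prod>C\<in>comps (bnd_arcs (ribbon D S) F) (d_ends D) - {marked_bcomp (ribbon D S) F}.
          K (loop_index (bnd_arcs (ribbon D S) F) (d_ends D) (d_arw D) C)) = PK"
    unfolding loops_eq(1)[OF wf] PK_def S'_def X_def
    by (rule prod.cong[OF refl]) (simp add: loops_eq(3)[OF wf])
  have rbc: "bc (ribbon D S) F = m" unfolding loops_eq(2)[OF wf] m_def X_def S'_def ..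
  have rmv: "marked_value (ribbon D S) F L L' = V" unfolding marked_eq[OF wf] V_def S'_def ..
  have w: "A ^ card S * B ^ (ncross D - card S) * (\<Prod>e\<in>F. if e \<in> S then B / A else A / B)
       = A ^ card S' * B ^ (ncross D - card S')"
    using weight_eq[of "{0..<ncross D}" S F A B] S F A B unfolding S'_def by simp
  have dm: "d ^ m / d = d ^ (m - 1)" using d m1
    by (metis (no_types, lifting) One_nat_def Suc_diff_le diff_Suc_1 nonzero_mult_div_cancel_left power_Suc)
  show ?thesis
    unfolding S'_def[symmetric] X_def[symmetric]
    unfolding ribbon_simps lhs rK rbc rmv V_def[symmetric]
  proof -
    have "A ^ card S * B ^ (ncross D - card S) / d *
      (1 ^ kcomp (ribbon D S) F * (\<Prod>e\<in>F. if e \<in> S then B / A else A / B) * d ^ m * PK * V)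
      = (A ^ card S * B ^ (ncross D - card S) * (\<Prod>e\<in>F. if e \<in> S then B / A else A / B)) * (d ^ m / d) * PK * V"
      by (simp add: field_simps)
    also have "\<dots> = A ^ card S' * B ^ (ncross D - card S') * (d ^ (m - 1) * PK) * V"
      unfolding w dm by (simp add: mult.assoc)
    finally show "A ^ card S' * B ^ (ncross D - card S') * (d ^ (m - 1) * PK) * V =
      A ^ card S * B ^ (ncross D - card S) / d *
      (1 ^ kcomp (ribbon D S) F * (\<Prod>e\<in>F. if e \<in> S then B / A else A / B) * d ^ m * PK * V)" by simp
  qed
qed




lemma part1:
  fixes A B d :: "'a::field"
  assumes wf: "wf_kdiag D" and S: "S \<subseteq> {0..<ncross D}"
    and A: "A \<noteq> 0" and B: "B \<noteq> 0" and d: "d \<noteq> 0"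
  shows "arrow_bracket D A B d K L L' =
           A ^ epos (ribbon D S) * B ^ eneg (ribbon D S) / d *
           arrowBR (ribbon D S) 1 (\<lambda>e. if rsign (ribbon D S) e then B / A else A / B) d K L L'"
proof -
  let ?N = "{0..<ncross D}"
  let ?D = "\<lambda>F. S - F \<union> (F - S)"
  let ?c = "A ^ card S * B ^ (ncross D - card S) / d"
  let ?R = "\<lambda>F. 1 ^ kcomp (ribbon D S) F * (\<Prod>e\<in>F. (\<lambda>e. if rsign (ribbon D S) e then B / A else A / B) e) *
       d ^ bc (ribbon D S) F *
       (\<Prod>C\<in>comps (bnd_arcs (ribbon D S) F) (rends (ribbon D S)) - {marked_bcomp (ribbon D S) F}.
          K (loop_index (bnd_arcs (ribbon D S) F) (rends (ribbon D S)) (rarw (ribbon D S)) C)) *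
       marked_value (ribbon D S) F L L'"
  let ?T = "\<lambda>S'. A ^ card S' * B ^ (ncross D - card S') *
      (\<Prod>C\<in>state_loops D S'. d * K (loop_index (state_arcs D S') (d_ends D) (d_arw D) C)) *
      arc_value D S' L L'"
  have rhs: "A ^ epos (ribbon D S) * B ^ eneg (ribbon D S) / d *
           arrowBR (ribbon D S) 1 (\<lambda>e. if rsign (ribbon D S) e then B / A else A / B) d K L L'
         = (\<Sum>F\<in>Pow ?N. ?c * ?R F)"
    unfolding epos_ribbon[OF S] eneg_ribbon[OF S] arrowBR_def sum_distrib_left
    by (simp only: ribbon_simps(4))
  have lhs: "arrow_bracket D A B d K L L' = (\<Sum>S'\<in>Pow ?N. ?T S')"
    unfolding arrow_bracket_def ..
  have "(\<Sum>F\<in>Pow ?N. ?c * ?R F) = (\<Sum>S'\<in>Pow ?N. ?T S')"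
  proof (rule sum.reindex_bij_witness[of _ ?D ?D])
    fix F assume "F \<in> Pow ?N"
    show "?D (?D F) = F" by auto
    show "?D F \<in> Pow ?N" using \<open>F \<in> Pow ?N\<close> S by auto
    show "?T (?D F) = ?c * ?R F"
      using term_eq[OF wf S _ A B d, of F K L L'] \<open>F \<in> Pow ?N\<close> by simp
  qed (use S in auto)
  then show ?thesis unfolding rhs lhs by simp
qed

theorem mainTheorem11:
  fixes D :: kdiag and S :: "nat set"
    and A B d :: "'a::field" and K L L' :: "nat \<Rightarrow> 'a"
  assumes "wf_kdiag D" and "S \<subseteq> {0..<ncross D}"
    and "A \<noteq> 0" and "B \<noteq> 0" and "d \<noteq> 0"
    and "K 0 = 1" and "L 0 = 1" and "L' 0 = 1"
  shows "arrow_bracket D A B d K L L' =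
           A ^ epos (ribbon D S) * B ^ eneg (ribbon D S) / d *
           arrowBR (ribbon D S) 1 (\<lambda>e. if rsign (ribbon D S) e then B / A else A / B) d K L L'
         \<and> (- (A ^ 2) - inverse A ^ 2 \<noteq> 0 \<longrightarrow>
         arrow_poly D A K L L' =
           A powi (int (epos (ribbon D S)) - int (eneg (ribbon D S))) / (- (A ^ 2) - inverse A ^ 2) *
           arrowBR (ribbon D S) 1
             (\<lambda>e. if rsign (ribbon D S) e then inverse A / A else A / inverse A)
             (- (A ^ 2) - inverse A ^ 2) K L L')"
proof (intro conjI impI)
  show "arrow_bracket D A B d K L L' =
           A ^ epos (ribbon D S) * B ^ eneg (ribbon D S) / d *
           arrowBR (ribbon D S) 1 (\<lambda>e. if rsign (ribbon D S) e then B / A else A / B) d K L L'"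
    by (rule part1) (use assms in auto)
  assume dz: "- (A ^ 2) - inverse A ^ 2 \<noteq> 0"
  have iA: "inverse A \<noteq> 0" using assms(3) by simp
  have pw: "A ^ epos (ribbon D S) * inverse A ^ eneg (ribbon D S)
        = A powi (int (epos (ribbon D S)) - int (eneg (ribbon D S)))"
    using assms(3) by (simp add: power_int_diff power_inverse divide_inverse)
  show "arrow_poly D A K L L' =
           A powi (int (epos (ribbon D S)) - int (eneg (ribbon D S))) / (- (A ^ 2) - inverse A ^ 2) *
           arrowBR (ribbon D S) 1
             (\<lambda>e. if rsign (ribbon D S) e then inverse A / A else A / inverse A)
             (- (A ^ 2) - inverse A ^ 2) K L L'"
    unfolding arrow_poly_def part1[OF assms(1,2,3) iA dz] pw ..
qed

end
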